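(* Under the assumptions stated in the context, the function $x_i^{\mathrm{cv}}$ is locally Lipschitz continuous and directionally differentiable at $\hat{\mathbf{p}}$. Moreover, let $\hat{\boldsymbol{\xi}}$ be an arbitrary optimal solution of the optimization problem $\min_{\boldsymbol{\xi}\in \mathbb{R}^{n_x}} \xi_i$ s.t. $\mathbf{h}(\boldsymbol{\xi},\hat{\mathbf{p}})=\mathbf{0}$, $\mathbf{g}(\boldsymbol{\xi},\hat{\mathbf{p}})\le \mathbf{0}$ (whose optimal value is $x_i^{\mathrm{cv}}(\hat{\mathbf{p}})$). Then, for each direction $\mathbf{d}\in\mathbb{R}^{n_p}$, \begin{equation*} \begin{aligned} [x_i^{\mathrm{cv}}]'(\hat{\mathbf{p}};\mathbf{d})&\equiv\min_{\mathbf{w}\in\mathbb{R}^{n_x}}\quad w_i\\ \text{s.t.}\quad &[\nabla_\mathbf{x}g_k(\hat{\boldsymbol{\xi}},\hat{\mathbf{p}})]^\top\mathbf{w}\le-[\nabla_\mathbf{y}g_k(\hat{\boldsymbol{\xi}},\hat{\mathbf{p}})]^\top\mathbf{d},\quad\forall k\in\{1,...,n_g\}\text{ such that }g_k(\hat{\boldsymbol{\xi}},\hat{\mathbf{p}})=0,\\ &[\nabla_\mathbf{x}h_j(\hat{\boldsymbol{\xi}},\hat{\mathbf{p}})]^\top\mathbf{w}=-[\nabla_\mathbf{y}h_j(\hat{\boldsymbol{\xi}},\hat{\mathbf{p}})]^\top\mathbf{d},\quad\forall j\in\{1,...,l\}. \end{aligned} \end{equation*}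
   Context: Setting: a residual function $\mathbf{f}:\mathbb{R}^{n_x}\times\mathbb{R}^{n_p}\to\mathbb{R}^{n_x}$, a convex compact set $P\subset\mathbb{R}^{n_p}$, and $Q\subset P$ the (nonempty) set of $\mathbf{p}\in P$ for which $\mathbf{f}(\mathbf{z},\mathbf{p})=\mathbf{0}$ has a solution; an implicit function $\mathbf{x}:Q\to\mathbb{R}^{n_x}$ satisfies $\mathbf{f}(\mathbf{x}(\mathbf{p}),\mathbf{p})=\mathbf{0}$ with $\mathbf{x}(\mathbf{p})\in X:=[\mathbf{x}^{\mathrm{L}},\mathbf{x}^{\mathrm{U}}]$ for all $\mathbf{p}\in Q$. Given convex and concave relaxations $\mathbf{f}^{\mathrm{cv}},\mathbf{f}^{\mathrm{cc}}$ of $\mathbf{f}$ on $X\times P$, the implicit function convex relaxation is $x_i^{\mathrm{cv}}(\mathbf{p}):=\inf_{\boldsymbol{\xi}\in X}\xi_i$ s.t. $\mathbf{f}^{\mathrm{cv}}(\boldsymbol{\xi},\mathbf{p})\le\mathbf{0}\le\mathbf{f}^{\mathrm{cc}}(\boldsymbol{\xi},\mathbf{p})$ (with value $+\infty$ if infeasible). Assume $\mathbf{f}\equiv(\tilde{\mathbf{f}},\mathbf{h})$ where $\mathbf{h}:\mathbb{R}^{n_x}\times\mathbb{R}^{n_p}\to\mathbb{R}^{n_h}$ is affine and each $\tilde f_k$ is not affine, and the relaxations of each $\tilde f_k$ are piecewise differentiable: $\tilde f_k^{\mathrm{cv}}=\max_j \tilde f_k^{\mathrm{cv},j}$ with each $\tilde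 f_k^{\mathrm{cv},j}$ continuously differentiable and convex ($j=1,\dots,k_k$), and $\tilde f_k^{\mathrm{cc}}=\min_j \tilde f_k^{\mathrm{cc},j}$ with each $\tilde f_k^{\mathrm{cc},j}$ continuously differentiable and concave ($j=1,\dots,l_k$). Then for $\mathbf{p}\in Q$, $x_i^{\mathrm{cv}}(\mathbf{p})=\min_{\boldsymbol{\xi}\in\mathbb{R}^{n_x}}\xi_i$ s.t. $\mathbf{h}(\boldsymbol{\xi},\mathbf{p})=\mathbf{0}$, $\mathbf{g}(\boldsymbol{\xi},\mathbf{p})\le\mathbf{0}$, where $\mathbf{g}:\mathbb{R}^{n_x}\times\mathbb{R}^{n_p}\to\mathbb{R}^{n_g}$ collects all the inequality constraints $\tilde f_k^{\mathrm{cv},j}(\boldsymbol{\xi},\mathbf{p})\le 0$, $\tilde f_k^{\mathrm{cc},j}(\boldsymbol{\xi},\mathbf{p})\ge 0$ (written as $\le 0$ constraints) together with the box constraint $\boldsymbol{\xi}\in X$. Further assume, at some $\hat{\mathbf{p}}\in\mathrm{int}(Q)$: the (constant) gradients of the components $h_j$ with respect to $\boldsymbol{\xi}$ are linearly independent, and there is a neighborhood $N_{\hat{\mathbf{p}}}\subset Q$ of $\hat{\mathbf{p}}$ such that for each $\mathbf{p}\in N_{\hat{\mathbf{p}}}$ there exists $\boldsymbol{\xi}_\mathbf{p}\in X$ with $\mathbf{h}(\boldsymbol{\xi}_\mathbf{p},\mathbf{p})=\mathbf{0}$ and $\mathbf{g}(\boldsymbol{\xi}_\mathbf{p},\mathbf{p})<\mathbf{0}$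 (strong Slater condition). Here $\nabla_\mathbf{x}$ and $\nabla_\mathbf{y}$ denote partial gradients with respect to the first argument ($\boldsymbol{\xi}$) and second argument ($\mathbf{p}$), respectively, and $[x_i^{\mathrm{cv}}]'(\hat{\mathbf{p}};\mathbf{d})$ is the directional derivative. *)

theory Defs
  imports "HOL-Analysis.Analysis"
begin

definition C1_fun :: "('a::real_normed_vector \<Rightarrow> real) \<Rightarrow> bool" where
  "C1_fun F \<longleftrightarrow> (\<exists>F'. (\<forall>z. (F has_derivative blinfun_apply (F' z)) (at z))
                      \<and> continuous_on UNIV F')"

text \<open>Implicit function convex relaxation:
  x_i^cv(p) = inf { xi_i | xi in [xL,xU], fcv(xi,p) <= 0 <= fcc(xi,p) },
  with value +infinity when infeasible.\<close>
definition xcv ::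
  "(real^'n \<Rightarrow> real^'m \<Rightarrow> real^'n) \<Rightarrow> (real^'n \<Rightarrow> real^'m \<Rightarrow> real^'n)
   \<Rightarrow> real^'n \<Rightarrow> real^'n \<Rightarrow> 'n \<Rightarrow> real^'m \<Rightarrow> ereal" where
  "xcv fcv fcc xL xU i p =
     Inf ((\<lambda>\<xi>. ereal (\<xi> $ i)) `
          {\<xi> \<in> cbox xL xU. \<forall>k. fcv \<xi> p $ k \<le> 0 \<and> 0 \<le> fcc \<xi> p $ k})"

definition has_dir_deriv :: "(real^'m \<Rightarrow> real) \<Rightarrow> real^'m \<Rightarrow> real^'m \<Rightarrow> real \<Rightarrow> bool" where
  "has_dir_deriv F p d D \<longleftrightarrow> ((\<lambda>t. (F (p + t *\<^sub>R d) - F p) / t) \<longlongrightarrow> D) (at_right 0)"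

end

theory Submission
  imports Defs
begin

lemma dir_lim:
  fixes F :: "'a::real_normed_vector \<Rightarrow> real"
  assumes "(F has_derivative F') (at x)"
  shows "((\<lambda>t. (F (x + t *\<^sub>R v) - F x) / t) \<longlongrightarrow> F' v) (at_right 0)"
proof -
  have l: "((\<lambda>t. x + t *\<^sub>R v) has_derivative (\<lambda>t. t *\<^sub>R v)) (at 0)"
    by (auto intro!: derivative_eq_intros)
  have h1: "((\<lambda>t. F (x + t *\<^sub>R v)) has_derivative (\<lambda>t. F' (t *\<^sub>R v))) (at 0)"
    using has_derivative_compose[OF l] assms by simp
  have h2: "(\<lambda>t. F' (t *\<^sub>R v)) = (\<lambda>t. t * F' v)"
    using linear_cmul[OF has_derivative_linear[OF assms]] by simp
  have "((\<lambda>t. F (x + t *\<^sub>R v)) has_field_derivative F' v) (at 0)"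
  proof -
    have e: "(\<lambda>t. t * F' v) = (*) (F' v)" by (auto simp: mult.commute)
    show ?thesis using h1 unfolding has_field_derivative_def h2 e by simp
  qed
  then have "((\<lambda>t. (F (x + t *\<^sub>R v) - F x) / t) \<longlongrightarrow> F' v) (at 0)"
    by (simp add: has_field_derivative_iff)
  moreover have "at_right (0::real) \<le> at 0" by (simp add: at_le)
  ultimately show ?thesis using tendsto_mono by blast
qed

lemma grad_ineq:
  fixes F :: "'a::real_normed_vector \<Rightarrow> real"
  assumes cv: "convex_on S F" and d: "(F has_derivative F') (at x)" and xS: "x \<in> S" and yS: "y \<in> S"
  shows "F x + F' (y - x) \<le> F y"
proof -
  have lim: "((\<lambda>t. (F (x + t *\<^sub>R (y - x)) - F x) / t) \<longlongrightarrow> F' (y - x)) (at_right 0)"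
    by (rule dir_lim[OF d])
  have ev: "eventually (\<lambda>t. (F (x + t *\<^sub>R (y - x)) - F x) / t \<le> F y - F x) (at_right (0::real))"
    using eventually_at_right_real[of 0 1, OF zero_less_one]
  proof (rule eventually_mono)
    fix t :: real assume t: "t \<in> {0<..<1}"
    have "x + t *\<^sub>R (y - x) = (1 - t) *\<^sub>R x + t *\<^sub>R y" by (simp add: algebra_simps)
    moreover have "F ((1 - t) *\<^sub>R x + t *\<^sub>R y) \<le> (1 - t) * F x + t * F y"
      using convex_onD[OF cv, of t x y] t xS yS by auto
    ultimately have "F (x + t *\<^sub>R (y - x)) - F x \<le> t * (F y - F x)" by (simp add: algebra_simps)
    then show "(F (x + t *\<^sub>R (y - x)) - F x) / t \<le> F y - F x"
      using t by (simp add: divide_le_eq mult.commute)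
  qed
  have "F' (y - x) \<le> F y - F x"
    by (rule tendsto_upperbound[OF lim ev]) simp
  then show ?thesis by simp
qed

lemma ev_neg:
  fixes F :: "'a::real_normed_vector \<Rightarrow> real"
  assumes d: "(F has_derivative F') (at x)" and "F x = 0" and "F' v < 0"
  shows "eventually (\<lambda>t. F (x + t *\<^sub>R v) < 0) (at_right 0)"
proof -
  have "eventually (\<lambda>t. (F (x + t *\<^sub>R v) - F x) / t < 0) (at_right 0)"
    using order_tendstoD(2)[OF dir_lim[OF d] assms(3)] .
  moreover have "eventually (\<lambda>t::real. t > 0) (at_right 0)"
    by (simp add: eventually_at_right_less)
  ultimately show ?thesis
    by eventually_elim (use assms(2) in \<open>simp add: divide_less_0_iff\<close>)
qed

lemma ev_cont_neg:
  fixes F :: "'a::real_normed_vector \<Rightarrow> real"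
  assumes d: "(F has_derivative F') (at x)" and "F x < 0"
  shows "eventually (\<lambda>t. F (x + t *\<^sub>R v) < 0) (at_right 0)"
proof -
  have c: "isCont F x" using has_derivative_continuous[OF d] by simp
  have "((\<lambda>t. x + t *\<^sub>R v) \<longlongrightarrow> x + 0 *\<^sub>R v) (at_right (0::real))"
    by (intro tendsto_intros)
  then have "((\<lambda>t. F (x + t *\<^sub>R v)) \<longlongrightarrow> F x) (at_right (0::real))"
    using isCont_tendsto_compose[OF c] by simp
  from order_tendstoD(2)[OF this assms(2)] show ?thesis .
qed

lemma ev_le:
  fixes F :: "'a::real_normed_vector \<Rightarrow> real"
  assumes d: "(F has_derivative F') (at x)" and "F x \<le> 0" and "F x = 0 \<Longrightarrow> F' v < 0"
  shows "eventually (\<lambda>t. F (x + t *\<^sub>R v) \<le> 0) (at_right 0)"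
proof (cases "F x = 0")
  case True
  show ?thesis using ev_neg[OF d True assms(3)[OF True]] by (rule eventually_mono) simp
next
  case False
  then have "F x < 0" using assms(2) by simp
  show ?thesis using ev_cont_neg[OF d \<open>F x < 0\<close>, of v] by (rule eventually_mono) simp
qed

lemma aff_ev:
  fixes c0 c1 :: real
  assumes "c0 \<le> 0" "c0 = 0 \<Longrightarrow> c1 \<le> 0"
  shows "eventually (\<lambda>t. c0 + t * c1 \<le> 0) (at_right 0)"
proof (cases "c0 = 0")
  case True
  have c1: "c1 \<le> 0" using assms(2) True by blast
  show ?thesis using eventually_at_right_less[of 0]
  proof (rule eventually_mono)
    fix t :: real assume "0 < t"
    then have "t * c1 \<le> 0" using c1 by (simp add: mult_nonneg_nonpos)
    then show "c0 + t * c1 \<le> 0" using True by linarith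
  qed
next
  case False
  then have c0: "c0 < 0" using assms by simp
  define e where "e = - c0 / (\<bar>c1\<bar> + 1)"
  have e0: "0 < e" unfolding e_def using c0 by (intro divide_pos_pos) auto
  have ne: "\<bar>c1\<bar> + 1 \<noteq> 0" using abs_ge_zero[of c1] by linarith
  have e1: "e * (\<bar>c1\<bar> + 1) = - c0" unfolding e_def using ne by simp
  from eventually_at_right_real[OF e0] show ?thesis
  proof (rule eventually_mono)
    fix t assume t: "t \<in> {0<..<e}"
    have t0: "0 < t" and te: "t < e" using t by auto
    have p: "0 < \<bar>c1\<bar> + 1" using abs_ge_zero[of c1] by linarith
    have "t * (\<bar>c1\<bar> + 1) < e * (\<bar>c1\<bar> + 1)"
      using mult_strict_right_mono[OF te p] .
    then have "t * (\<bar>c1\<bar> + 1) < - c0" using e1 by linarith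
    moreover have "t * c1 \<le> t * (\<bar>c1\<bar> + 1)"
      using mult_left_mono[of c1 "\<bar>c1\<bar> + 1" t] t0 by linarith
    ultimately show "c0 + t * c1 \<le> 0" by linarith
  qed
qed

definition aff :: "('a::real_vector \<Rightarrow> real) \<Rightarrow> bool" where
  "aff h \<longleftrightarrow> (\<forall>w w' s. h ((1 - s) *\<^sub>R w + s *\<^sub>R w') = (1 - s) * h w + s * h w')"

lemma affD: "aff h \<Longrightarrow> h ((1 - s) *\<^sub>R w + s *\<^sub>R w') = (1 - s) * h w + s * h w'"
  unfolding aff_def by blast

lemma lp_attain:
  fixes g :: "'a::real_vector \<Rightarrow> real"
  assumes "finite K" "\<forall>h\<in>K. aff h" "\<forall>h\<in>J. aff h" "aff g"
    "\<exists>w. (\<forall>h\<in>K. h w \<le> 0) \<and> (\<forall>h\<in>J. h w = 0)"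
    "\<forall>w. (\<forall>h\<in>K. h w \<le> 0) \<and> (\<forall>h\<in>J. h w = 0) \<longrightarrow> m \<le> g w"
  shows "\<exists>w. ((\<forall>h\<in>K. h w \<le> 0) \<and> (\<forall>h\<in>J. h w = 0)) \<and>
    (\<forall>w'. (\<forall>h\<in>K. h w' \<le> 0) \<and> (\<forall>h\<in>J. h w' = 0) \<longrightarrow> g w \<le> g w')"
  using assms
proof (induction K arbitrary: J rule: finite_induct)
  case empty
  then obtain w0 where w0: "\<forall>h\<in>J. h w0 = 0" by auto
  have "g w0 \<le> g w'" if w': "\<forall>h\<in>J. h w' = 0" for w'
  proof (rule ccontr)
    assume "\<not> g w0 \<le> g w'"
    then have dne: "g w' - g w0 \<noteq> 0" by simp
    define s where "s = (m - 1 - g w0) / (g w' - g w0)"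
    define z where "z = (1 - s) *\<^sub>R w0 + s *\<^sub>R w'"
    have "\<forall>h\<in>J. h z = 0" unfolding z_def using empty.prems(2) w0 w' by (auto simp: affD)
    then have "m \<le> g z" using empty.prems(5) by simp
    moreover have "g z = g w0 + s * (g w' - g w0)"
      unfolding z_def using affD[OF empty.prems(3)] by (simp add: algebra_simps)
    moreover have "s * (g w' - g w0) = m - 1 - g w0" unfolding s_def using dne by simp
    ultimately show False by linarith
  qed
  then show ?case using w0 by auto
next
  case (insert h0 K)
  let ?T' = "\<lambda>w. (\<forall>h\<in>K. h w \<le> 0) \<and> (\<forall>h\<in>J. h w = 0)"
  let ?T = "\<lambda>w. (\<forall>h\<in>insert h0 K. h w \<le> 0) \<and> (\<forall>h\<in>J. h w = 0)"
  let ?F = "\<lambda>w. (\<forall>h\<in>K. h w \<le> 0) \<and> (\<forall>h\<in>insert h0 J. h w = 0)"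
  have affK: "\<forall>h\<in>K. aff h" and aff0: "aff h0" using insert.prems(1) by auto
  have A: "\<exists>w. ?T w \<and> (\<forall>w'. ?T w' \<longrightarrow> g w \<le> g w')"
    if w': "?T' w'" "h0 w' > 0" "\<forall>w. ?T w \<longrightarrow> g w' \<le> g w" for w'
  proof -
    have proj: "\<exists>z. ?F z \<and> g z \<le> g w" if w: "?T w" for w
    proof -
      have h0w: "h0 w \<le> 0" using w by simp
      define s where "s = - h0 w / (h0 w' - h0 w)"
      have den: "h0 w' - h0 w > 0" using h0w w'(2) by simp
      have s0: "0 \<le> s" unfolding s_def using divide_nonpos_pos[OF h0w den] by simp
      have s1: "s \<le> 1" unfolding s_def
        by (subst pos_divide_le_eq[OF den]) (use w'(2) in simp)
      define z where "z = (1 - s) *\<^sub>R w + s *\<^sub>R w'"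
      have "h0 z = h0 w + s * (h0 w' - h0 w)"
        unfolding z_def using affD[OF aff0] by (simp add: algebra_simps)
      also have "s * (h0 w' - h0 w) = - h0 w" unfolding s_def using den by simp
      finally have hz0: "h0 z = 0" by simp
      have "h z \<le> 0" if "h \<in> K" for h
      proof -
        have "h z = (1 - s) * h w + s * h w'" unfolding z_def using affD affK that by blast
        moreover have "h w \<le> 0" "h w' \<le> 0" using w w'(1) that by auto
        moreover have "(1 - s) * h w \<le> 0" using s1 \<open>h w \<le> 0\<close> by (simp add: mult_nonneg_nonpos)
        moreover have "s * h w' \<le> 0" using s0 \<open>h w' \<le> 0\<close> by (simp add: mult_nonneg_nonpos)
        ultimately show ?thesis by linarith
      qed
      moreover have "h z = 0" if "h \<in> J" for h
      proof -
        have "h z = (1 - s) * h w + s * h w'" unfolding z_def using affD insert.prems(2) that by blast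
        moreover have "h w = 0" "h w' = 0" using w w'(1) that by auto
        ultimately show ?thesis by simp
      qed
      moreover have "g z \<le> g w"
      proof -
        have "g z = g w + s * (g w' - g w)"
          unfolding z_def using affD[OF insert.prems(3)] by (simp add: algebra_simps)
        moreover have "s * (g w' - g w) \<le> 0" using s0 w'(3) w by (simp add: mult_nonneg_nonpos)
        ultimately show ?thesis by simp
      qed
      ultimately show ?thesis using hz0 by auto
    qed
    obtain w0 where "?T w0" using insert.prems(4) by blast
    then obtain z0 where "?F z0" using proj by blast
    have "\<exists>w. ?F w \<and> (\<forall>w'. ?F w' \<longrightarrow> g w \<le> g w')"
    proof (rule insert.IH)
      show "\<forall>h\<in>K. aff h" by (rule affK)
      show "\<forall>h\<in>insert h0 J. aff h" using aff0 insert.prems(2) by auto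
      show "aff g" by (rule insert.prems(3))
      show "\<exists>w. ?F w" using \<open>?F z0\<close> by blast
      show "\<forall>w. ?F w \<longrightarrow> m \<le> g w" using insert.prems(5) by auto
    qed
    then obtain zs where zs: "?F zs" "\<forall>w'. ?F w' \<longrightarrow> g zs \<le> g w'" by blast
    have "?T zs" using zs(1) by auto
    moreover have "g zs \<le> g w" if tw: "?T w" for w
    proof -
      obtain z where z: "?F z" "g z \<le> g w" using proj[OF tw] by blast
      have "g zs \<le> g z" using zs(2) z(1) by blast
      then show ?thesis using z(2) by linarith
    qed
    ultimately show ?thesis by blast
  qed
  show ?case
  proof (cases "\<exists>w'. ?T' w' \<and> h0 w' > 0 \<and> (\<forall>w. ?T w \<longrightarrow> g w' \<le> g w)")
    case True
    then show ?thesis using A by blast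
  next
    case False
    have "\<exists>w. ?T' w \<and> (\<forall>w'. ?T' w' \<longrightarrow> g w \<le> g w')"
    proof (rule insert.IH)
      show "\<forall>h\<in>K. aff h" by (rule affK)
      show "\<forall>h\<in>J. aff h" by (rule insert.prems(2))
      show "aff g" by (rule insert.prems(3))
      show "\<exists>w. ?T' w" using insert.prems(4) by auto
      show "\<forall>w. ?T' w \<longrightarrow> m \<le> g w"
      proof (intro allI impI)
        fix w' assume w': "?T' w'"
        show "m \<le> g w'"
        proof (cases "h0 w' \<le> 0")
          case True
          then show ?thesis using w' insert.prems(5) by auto
        next
          case c: False
          have "h0 w' > 0" using c by simp
          then have "\<not> (\<forall>w. ?T w \<longrightarrow> g w' \<le> g w)" using False w' by blast
          then obtain w where w: "?T w" "\<not> g w' \<le> g w" by blast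
          have "m \<le> g w" using insert.prems(5) w(1) by blast
          then show ?thesis using w(2) by linarith
        qed
      qed
    qed
    then obtain zs where zs: "?T' zs" "\<forall>w'. ?T' w' \<longrightarrow> g zs \<le> g w'" by blast
    show ?thesis
    proof (cases "h0 zs \<le> 0")
      case True
      then show ?thesis using zs by auto
    next
      case c: False
      then have "?T' zs \<and> h0 zs > 0 \<and> (\<forall>w. ?T w \<longrightarrow> g zs \<le> g w)" using zs by auto
      then show ?thesis using False by blast
    qed
  qed
qed

lemma convex_lipschitz:
  fixes V :: "'a::real_normed_vector \<Rightarrow> real"
  assumes cv: "convex_on (ball c (2*r)) V" and r: "0 < r" and bd: "\<forall>x\<in>ball c (2*r). \<bar>V x\<bar> \<le> M"
  shows "\<forall>x\<in>ball c r. \<forall>y\<in>ball c r. \<bar>V x - V y\<bar> \<le> (2*M/r) * dist x y"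
proof -
  have "c \<in> ball c (2*r)" using r by simp
  then have "\<bar>V c\<bar> \<le> M" using bd by blast
  then have M0: "0 \<le> M" using abs_ge_zero[of "V c"] by linarith
  have key: "V y - V x \<le> (2*M/r) * norm (y - x)" if x: "x \<in> ball c r" and y: "y \<in> ball c r" for x y
  proof (cases "x = y")
    case True then show ?thesis by simp
  next
    case False
    define \<delta> where "\<delta> = norm (y - x)"
    have d0: "\<delta> > 0" unfolding \<delta>_def using False by simp
    define z where "z = y + (r / \<delta>) *\<^sub>R (y - x)"
    define \<theta> where "\<theta> = \<delta> / (\<delta> + r)"
    have th0: "0 \<le> \<theta>" "\<theta> \<le> 1" unfolding \<theta>_def using d0 r by auto
    have "norm (z - y) = r" unfolding z_def \<delta>_def using d0 r \<delta>_def by simp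
    then have "dist y z = r" by (simp add: dist_norm norm_minus_commute)
    moreover have "dist c y < r" using y by simp
    ultimately have "dist c z < 2 * r" using dist_triangle[of c z y] by linarith
    then have zb: "z \<in> ball c (2*r)" by simp
    have xb: "x \<in> ball c (2*r)" using x r by simp
    have co: "\<theta> * (r / \<delta>) = 1 - \<theta>" unfolding \<theta>_def using d0 r by (simp add: field_simps)
    have "(1 - \<theta>) *\<^sub>R x + \<theta> *\<^sub>R z = (1 - \<theta>) *\<^sub>R x + \<theta> *\<^sub>R y + (\<theta> * (r / \<delta>)) *\<^sub>R (y - x)"
      unfolding z_def by (simp add: algebra_simps)
    also have "\<dots> = y" unfolding co by (simp add: algebra_simps)
    finally have yeq: "(1 - \<theta>) *\<^sub>R x + \<theta> *\<^sub>R z = y" .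
    have "V y \<le> (1 - \<theta>) * V x + \<theta> * V z"
      using convex_onD[OF cv th0 xb zb] yeq by simp
    then have "V y - V x \<le> \<theta> * (V z - V x)" by (simp add: algebra_simps)
    also have "\<dots> \<le> \<theta> * (2 * M)"
    proof -
      have "\<bar>V z\<bar> \<le> M" "\<bar>V x\<bar> \<le> M" using bd xb zb by auto
      then have "V z - V x \<le> 2 * M" by (simp add: abs_le_iff)
      then show ?thesis using th0 by (intro mult_left_mono) auto
    qed
    also have "\<dots> \<le> (\<delta> / r) * (2 * M)"
      using M0 d0 r unfolding \<theta>_def by (intro mult_right_mono) (auto simp: frac_le)
    also have "\<dots> = (2*M/r) * norm (y - x)" unfolding \<delta>_def by simp
    finally show ?thesis .
  qed
  show ?thesis
  proof (intro ballI)
    fix x y assume x: "x \<in> ball c r" and y: "y \<in> ball c r"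
    have "V y - V x \<le> (2*M/r) * dist x y" using key[OF x y] by (simp add: dist_norm norm_minus_commute)
    moreover have "V x - V y \<le> (2*M/r) * dist x y" using key[OF y x] by (simp add: dist_norm)
    ultimately show "\<bar>V x - V y\<bar> \<le> (2*M/r) * dist x y" by simp
  qed
qed

lemma C1_deriv: "C1_fun F \<Longrightarrow> (F has_derivative frechet_derivative F (at z)) (at z)"
  unfolding C1_fun_def using frechet_derivative_works differentiableI by blast

lemma C1_cont: 
  assumes "C1_fun F" shows "continuous_on UNIV F"
proof (rule has_derivative_continuous_on)
  fix x show "(F has_derivative frechet_derivative F (at x)) (at x within UNIV)"
    using C1_deriv[OF assms] by simp
qed

lemma C1_cont_slice:
  fixes G :: "'a::real_normed_vector \<Rightarrow> 'b::real_normed_vector \<Rightarrow> real"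
  assumes "C1_fun (\<lambda>(z,q). G z q)"
  shows "continuous_on UNIV (\<lambda>z. G z p)"
proof -
  have "continuous_on UNIV ((\<lambda>(z,q). G z q) \<circ> (\<lambda>z. (z,p)))"
    by (rule continuous_on_compose) (auto intro!: continuous_intros continuous_on_subset[OF C1_cont[OF assms]])
  then show ?thesis by (simp add: o_def)
qed

lemma Max_set_le:
  fixes F :: "nat \<Rightarrow> real"
  assumes "n \<ge> 1"
  shows "(Max {F j | j. j < n} \<le> 0) \<longleftrightarrow> (\<forall>j<n. F j \<le> 0)"
proof -
  have e: "{F j | j. j < n} = F ` {..<n}" by auto
  have "0 \<in> {..<n}" using assms by simp
  then have "F ` {..<n} \<noteq> {}" by blast
  then show ?thesis unfolding e by (subst Max_le_iff) auto
qed

lemma Min_set_ge: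
  fixes F :: "nat \<Rightarrow> real"
  assumes "n \<ge> 1"
  shows "(0 \<le> Min {F j | j. j < n}) \<longleftrightarrow> (\<forall>j<n. 0 \<le> F j)"
proof -
  have e: "{F j | j. j < n} = F ` {..<n}" by auto
  have "0 \<in> {..<n}" using assms by simp
  then have "F ` {..<n} \<noteq> {}" by blast
  then show ?thesis unfolding e by (subst Min_ge_iff) auto
qed

lemma closed_imp_const: "(P \<Longrightarrow> closed {x. Q x}) \<Longrightarrow> closed {x. P \<longrightarrow> Q x}"
  by (cases P) auto

lemma comb_ge: "0 \<le> (t::real) \<Longrightarrow> t \<le> 1 \<Longrightarrow> c \<le> a \<Longrightarrow> c \<le> b \<Longrightarrow> c \<le> (1 - t) * a + t * b"
proof -
  assume "0 \<le> t" "t \<le> 1" "c \<le> a" "c \<le> b"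
  then have "(1 - t) * c \<le> (1 - t) * a" "t * c \<le> t * b" by (auto intro: mult_left_mono)
  then show ?thesis by (simp add: algebra_simps)
qed

lemma comb_le: "0 \<le> (t::real) \<Longrightarrow> t \<le> 1 \<Longrightarrow> a \<le> c \<Longrightarrow> b \<le> c \<Longrightarrow> (1 - t) * a + t * b \<le> c"
  using comb_ge[of t "-c" "-a" "-b"] by simp

lemma aff_lin_pair:
  assumes "linear L"
  shows "aff (\<lambda>w. L (w, d))"
  unfolding aff_def
proof (intro allI)
  fix w w' :: 'a and s :: real
  have "((1 - s) *\<^sub>R w + s *\<^sub>R w', d) = (1 - s) *\<^sub>R (w, d) + s *\<^sub>R (w', d)"
    by (simp add: algebra_simps)
  then show "L ((1 - s) *\<^sub>R w + s *\<^sub>R w', d) = (1 - s) * L (w, d) + s * L (w', d)"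
    using linear_add[OF assms] linear_cmul[OF assms] by (metis real_scaleR_def)
qed

lemma aff_neg: "aff h \<Longrightarrow> aff (\<lambda>w. - h w)"
  unfolding aff_def by (simp add: algebra_simps)

lemma aff_inner: "aff (\<lambda>w. a \<bullet> w + c)"
  unfolding aff_def by (simp add: algebra_simps inner_add_right)

lemma aff_nth: "aff (\<lambda>w::real^'n. w $ m)"
  unfolding aff_def by simp

theorem proposition5p1:
  fixes f fcv fcc :: "real^'n::finite \<Rightarrow> real^'p::finite \<Rightarrow> real^'n"
    and P Q :: "(real^'p) set"
    and xL xU :: "real^'n"
    and x :: "real^'p \<Rightarrow> real^'n"
    and H :: "'n set"
    and A B :: "'n \<Rightarrow> real^'n" and C :: "'n \<Rightarrow> real" and Bp :: "'n \<Rightarrow> real^'p"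
    and ncv ncc :: "'n \<Rightarrow> nat"
    and \<phi> \<psi> :: "'n \<Rightarrow> nat \<Rightarrow> real^'n \<Rightarrow> real^'p \<Rightarrow> real"
    and i :: 'n and phat :: "real^'p" and \<xi>hat :: "real^'n"
  assumes P_convex: "convex P" and P_compact: "compact P"
    and Q_def: "Q = {p \<in> P. \<exists>z. f z p = 0}" and Q_ne: "Q \<noteq> {}"
    and x_implicit: "\<forall>p\<in>Q. f (x p) p = 0 \<and> x p \<in> cbox xL xU"
    \<comment> \<open>convex / concave relaxations of f on X \<times> P\<close>
    and fcv_convex: "\<forall>k. convex_on (cbox xL xU \<times> P) (\<lambda>(z,q). fcv z q $ k)"
    and fcc_concave: "\<forall>k. concave_on (cbox xL xU \<times> P) (\<lambda>(z,q). fcc z q $ k)"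
    and relax: "\<forall>z\<in>cbox xL xU. \<forall>q\<in>P. \<forall>k. fcv z q $ k \<le> f z q $ k \<and> f z q $ k \<le> fcc z q $ k"
    \<comment> \<open>components in H form the affine part h; the others (f tilde) are not affine\<close>
    and h_affine: "\<forall>k\<in>H. \<forall>z q. f z q $ k = C k + A k \<bullet> z + Bp k \<bullet> q"
    and ftilde_not_affine: "\<forall>k\<in>-H. \<not> (\<exists>c a b. \<forall>z q. f z q $ k = c + a \<bullet> z + b \<bullet> q)"
    and h_relax: "\<forall>k\<in>H. \<forall>z q. fcv z q $ k = f z q $ k \<and> fcc z q $ k = f z q $ k"
    \<comment> \<open>piecewise differentiable relaxations of f tilde\<close>
    and ncv_pos: "\<forall>k\<in>-H. ncv k \<ge> 1" and ncc_pos: "\<forall>k\<in>-H. ncc k \<ge> 1"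
    and fcv_max: "\<forall>k\<in>-H. \<forall>z\<in>cbox xL xU. \<forall>q\<in>P. fcv z q $ k = Max {\<phi> k j z q | j. j < ncv k}"
    and fcc_min: "\<forall>k\<in>-H. \<forall>z\<in>cbox xL xU. \<forall>q\<in>P. fcc z q $ k = Min {\<psi> k j z q | j. j < ncc k}"
    and \<phi>_C1: "\<forall>k\<in>-H. \<forall>j<ncv k. C1_fun (\<lambda>(z,q). \<phi> k j z q)"
    and \<phi>_convex: "\<forall>k\<in>-H. \<forall>j<ncv k. convex_on (cbox xL xU \<times> P) (\<lambda>(z,q). \<phi> k j z q)"
    and \<psi>_C1: "\<forall>k\<in>-H. \<forall>j<ncc k. C1_fun (\<lambda>(z,q). \<psi> k j z q)"
    and \<psi>_concave: "\<forall>k\<in>-H. \<forall>j<ncc k. concave_on (cbox xL xU \<times> P) (\<lambda>(z,q). \<psi> k j z q)"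
    \<comment> \<open>assumptions at phat\<close>
    and phat_int: "phat \<in> interior Q"
    and LICQ_h: "\<forall>c. (\<Sum>k\<in>H. c k *\<^sub>R A k) = 0 \<longrightarrow> (\<forall>k\<in>H. c k = 0)"
    and strong_slater: "\<exists>N. open N \<and> phat \<in> N \<and> N \<subseteq> Q \<and>
        (\<forall>p\<in>N. \<exists>\<xi>\<in>cbox xL xU.
            (\<forall>k\<in>H. f \<xi> p $ k = 0)
          \<and> (\<forall>k\<in>-H. \<forall>j<ncv k. \<phi> k j \<xi> p < 0)
          \<and> (\<forall>k\<in>-H. \<forall>j<ncc k. - \<psi> k j \<xi> p < 0)
          \<and> (\<forall>m. xL $ m - \<xi> $ m < 0 \<and> \<xi> $ m - xU $ m < 0))"
    \<comment> \<open>\<xi>hat is an optimal solution of the NLP at phat\<close>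
    and \<xi>hat_feas: "(\<forall>k\<in>H. f \<xi>hat phat $ k = 0)
          \<and> (\<forall>k\<in>-H. \<forall>j<ncv k. \<phi> k j \<xi>hat phat \<le> 0)
          \<and> (\<forall>k\<in>-H. \<forall>j<ncc k. - \<psi> k j \<xi>hat phat \<le> 0)
          \<and> (\<forall>m. xL $ m - \<xi>hat $ m \<le> 0 \<and> \<xi>hat $ m - xU $ m \<le> 0)"
    and \<xi>hat_opt: "\<forall>\<xi>. ((\<forall>k\<in>H. f \<xi> phat $ k = 0)
          \<and> (\<forall>k\<in>-H. \<forall>j<ncv k. \<phi> k j \<xi> phat \<le> 0)
          \<and> (\<forall>k\<in>-H. \<forall>j<ncc k. - \<psi> k j \<xi> phat \<le> 0)
          \<and> (\<forall>m. xL $ m - \<xi> $ m \<le> 0 \<and> \<xi> $ m - xU $ m \<le> 0)) \<longrightarrow> \<xi>hat $ i \<le> \<xi> $ i"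
  shows
    \<comment> \<open>local Lipschitz continuity at phat (with finite values near phat)\<close>
    "(\<exists>e>0. \<exists>L. \<forall>p\<in>ball phat e. \<forall>q\<in>ball phat e.
        \<bar>xcv fcv fcc xL xU i p\<bar> \<noteq> \<infinity> \<and>
        \<bar>real_of_ereal (xcv fcv fcc xL xU i p) - real_of_ereal (xcv fcv fcc xL xU i q)\<bar> \<le> L * dist p q)
   \<and> (\<forall>d. \<exists>w.
        \<comment> \<open>w is feasible for the linearized problem\<close>
        (let lin = (\<lambda>w::real^'n.
             (\<forall>k\<in>-H. \<forall>j<ncv k. \<phi> k j \<xi>hat phat = 0 \<longrightarrow>
                 frechet_derivative (\<lambda>(z,q). \<phi> k j z q) (at (\<xi>hat, phat)) (w, d) \<le> 0)
           \<and> (\<forall>k\<in>-H. \<forall>j<ncc k. \<psi> k j \<xi>hat phat = 0 \<longrightarrow>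
                 - frechet_derivative (\<lambda>(z,q). \<psi> k j z q) (at (\<xi>hat, phat)) (w, d) \<le> 0)
           \<and> (\<forall>m. xL $ m - \<xi>hat $ m = 0 \<longrightarrow> - w $ m \<le> 0)
           \<and> (\<forall>m. \<xi>hat $ m - xU $ m = 0 \<longrightarrow> w $ m \<le> 0)
           \<and> (\<forall>k\<in>H. A k \<bullet> w = - (Bp k \<bullet> d)))
         in lin w \<and> (\<forall>w'. lin w' \<longrightarrow> w $ i \<le> w' $ i)
            \<and> has_dir_deriv (\<lambda>p. real_of_ereal (xcv fcv fcc xL xU i p)) phat d (w $ i)))"
proof -
  define S where "S = (\<lambda>p. {\<xi>. (\<forall>k\<in>H. f \<xi> p $ k = 0)
          \<and> (\<forall>k\<in>-H. \<forall>j<ncv k. \<phi> k j \<xi> p \<le> 0)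
          \<and> (\<forall>k\<in>-H. \<forall>j<ncc k. - \<psi> k j \<xi> p \<le> 0)
          \<and> (\<forall>m. xL $ m - \<xi> $ m \<le> 0 \<and> \<xi> $ m - xU $ m \<le> 0)})"
  define V where "V = (\<lambda>p. real_of_ereal (xcv fcv fcc xL xU i p))"
  have QP: "Q \<subseteq> P" using Q_def by auto
  have S_box: "\<xi> \<in> cbox xL xU" if "\<xi> \<in> S p" for \<xi> p
    using that unfolding S_def mem_box_cart by auto
  have setEq: "{\<xi> \<in> cbox xL xU. \<forall>k. fcv \<xi> p $ k \<le> 0 \<and> 0 \<le> fcc \<xi> p $ k} = S p"
    if pP: "p \<in> P" for p
  proof (intro set_eqI iffI)
    fix \<xi> assume a: "\<xi> \<in> {\<xi> \<in> cbox xL xU. \<forall>k. fcv \<xi> p $ k \<le> 0 \<and> 0 \<le> fcc \<xi> p $ k}"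
    then have box: "\<xi> \<in> cbox xL xU" and c: "\<And>k. fcv \<xi> p $ k \<le> 0 \<and> 0 \<le> fcc \<xi> p $ k" by auto
    have "f \<xi> p $ k = 0" if "k \<in> H" for k
      using c[of k] h_relax that by force
    moreover have "\<phi> k j \<xi> p \<le> 0" if "k \<in> -H" "j < ncv k" for k j
      using c[of k] fcv_max box pP that Max_set_le[of "ncv k" "\<lambda>j. \<phi> k j \<xi> p"] ncv_pos by force
    moreover have "- \<psi> k j \<xi> p \<le> 0" if "k \<in> -H" "j < ncc k" for k j
      using c[of k] fcc_min box pP that Min_set_ge[of "ncc k" "\<lambda>j. \<psi> k j \<xi> p"] ncc_pos by force
    moreover have "xL $ m - \<xi> $ m \<le> 0 \<and> \<xi> $ m - xU $ m \<le> 0" for m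
      using box unfolding mem_box_cart by auto
    ultimately show "\<xi> \<in> S p" unfolding S_def by blast
  next
    fix \<xi> assume a: "\<xi> \<in> S p"
    have box: "\<xi> \<in> cbox xL xU" using S_box[OF a] .
    have "fcv \<xi> p $ k \<le> 0 \<and> 0 \<le> fcc \<xi> p $ k" for k
    proof (cases "k \<in> H")
      case True
      then show ?thesis using a h_relax unfolding S_def by auto
    next
      case False
      then have kH: "k \<in> -H" by simp
      have "\<forall>j<ncv k. \<phi> k j \<xi> p \<le> 0" "\<forall>j<ncc k. 0 \<le> \<psi> k j \<xi> p"
        using a kH unfolding S_def by auto
      then show ?thesis
        using fcv_max fcc_min box pP kH Max_set_le[of "ncv k" "\<lambda>j. \<phi> k j \<xi> p"]
          Min_set_ge[of "ncc k" "\<lambda>j. \<psi> k j \<xi> p"] ncv_pos ncc_pos by force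
    qed
    then show "\<xi> \<in> {\<xi> \<in> cbox xL xU. \<forall>k. fcv \<xi> p $ k \<le> 0 \<and> 0 \<le> fcc \<xi> p $ k}"
      using box by blast
  qed
  have S_closed: "closed (S p)" for p
  proof -
    have c1: "closed {\<xi>. \<forall>k. k \<in> H \<longrightarrow> f \<xi> p $ k = 0}"
    proof (intro closed_Collect_all closed_imp_const)
      fix k assume "k \<in> H"
      then have "{\<xi>. f \<xi> p $ k = 0} = {\<xi>. C k + A k \<bullet> \<xi> + Bp k \<bullet> p = 0}" using h_affine by auto
      also have "closed \<dots>" by (intro closed_Collect_eq continuous_intros)
      finally show "closed {\<xi>. f \<xi> p $ k = 0}" .
    qed
    have c2: "closed {\<xi>. \<forall>k. k \<in> -H \<longrightarrow> (\<forall>j. j < ncv k \<longrightarrow> \<phi> k j \<xi> p \<le> 0)}"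
    proof (intro closed_Collect_all closed_imp_const)
      fix k j assume "k \<in> -H" "j < ncv k"
      then have "continuous_on UNIV (\<lambda>\<xi>. \<phi> k j \<xi> p)" using \<phi>_C1 C1_cont_slice by blast
      then show "closed {\<xi>. \<phi> k j \<xi> p \<le> 0}" by (intro closed_Collect_le continuous_intros)
    qed
    have c3: "closed {\<xi>. \<forall>k. k \<in> -H \<longrightarrow> (\<forall>j. j < ncc k \<longrightarrow> - \<psi> k j \<xi> p \<le> 0)}"
    proof (intro closed_Collect_all closed_imp_const)
      fix k j assume "k \<in> -H" "j < ncc k"
      then have "continuous_on UNIV (\<lambda>\<xi>. \<psi> k j \<xi> p)" using \<psi>_C1 C1_cont_slice by blast
      then show "closed {\<xi>. - \<psi> k j \<xi> p \<le> 0}" by (intro closed_Collect_le continuous_intros)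
    qed
    have c4: "closed {\<xi>::real^'n. \<forall>m. xL $ m - \<xi> $ m \<le> 0 \<and> \<xi> $ m - xU $ m \<le> 0}"
      by (intro closed_Collect_all closed_Collect_conj closed_Collect_le continuous_intros
          linear_continuous_on bounded_linear_vec_nth)
    have "S p = {\<xi>. \<forall>k. k \<in> H \<longrightarrow> f \<xi> p $ k = 0} \<inter> {\<xi>. \<forall>k. k \<in> -H \<longrightarrow> (\<forall>j. j < ncv k \<longrightarrow> \<phi> k j \<xi> p \<le> 0)}
      \<inter> {\<xi>. \<forall>k. k \<in> -H \<longrightarrow> (\<forall>j. j < ncc k \<longrightarrow> - \<psi> k j \<xi> p \<le> 0)}
      \<inter> {\<xi>::real^'n. \<forall>m. xL $ m - \<xi> $ m \<le> 0 \<and> \<xi> $ m - xU $ m \<le> 0}"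
      unfolding S_def by auto
    then show ?thesis using c1 c2 c3 c4 by (simp add: closed_Int)
  qed
  have S_compact: "compact (S p)" for p
    using S_closed[of p] bounded_subset[OF bounded_cbox, of "S p" xL xU] S_box
    by (simp add: compact_eq_bounded_closed subset_eq)
  have xcv_eq: "xcv fcv fcc xL xU i p = ereal (\<xi> $ i)"
    if pP: "p \<in> P" and xi: "\<xi> \<in> S p" and mn: "\<forall>\<xi>'\<in>S p. \<xi> $ i \<le> \<xi>' $ i" for p \<xi>
    unfolding xcv_def setEq[OF pP]
  proof (rule INF_eqI)
    fix \<xi>' assume "\<xi>' \<in> S p" then show "ereal (\<xi> $ i) \<le> ereal (\<xi>' $ i)" using mn by simp
  next
    fix y assume "\<And>\<xi>'. \<xi>' \<in> S p \<Longrightarrow> y \<le> ereal (\<xi>' $ i)"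
    then show "y \<le> ereal (\<xi> $ i)" using xi by blast
  qed
  define xi where "xi = (\<lambda>p. SOME \<xi>. \<xi> \<in> S p \<and> (\<forall>\<xi>'\<in>S p. \<xi> $ i \<le> \<xi>' $ i))"
  have xi: "xi p \<in> S p \<and> (\<forall>\<xi>'\<in>S p. xi p $ i \<le> \<xi>' $ i) \<and> V p = xi p $ i
      \<and> xcv fcv fcc xL xU i p = ereal (xi p $ i)"
    if pP: "p \<in> P" and ne: "S p \<noteq> {}" for p
  proof -
    have "continuous_on (S p) (\<lambda>\<xi>::real^'n. \<xi> $ i)"
      by (intro linear_continuous_on bounded_linear_vec_nth)
    then have "\<exists>\<xi>\<in>S p. \<forall>\<xi>'\<in>S p. \<xi> $ i \<le> \<xi>' $ i"
      using continuous_attains_inf[OF S_compact ne] by blast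
    then have "xi p \<in> S p \<and> (\<forall>\<xi>'\<in>S p. xi p $ i \<le> \<xi>' $ i)"
      unfolding xi_def by (rule someI2_bex) blast
    moreover have "xcv fcv fcc xL xU i p = ereal (xi p $ i)" using xcv_eq pP calculation by blast
    ultimately show ?thesis unfolding V_def by simp
  qed
  from strong_slater obtain N where N: "open N" "phat \<in> N" "N \<subseteq> Q"
    and sl: "\<forall>p\<in>N. \<exists>\<xi>\<in>cbox xL xU.
            (\<forall>k\<in>H. f \<xi> p $ k = 0)
          \<and> (\<forall>k\<in>-H. \<forall>j<ncv k. \<phi> k j \<xi> p < 0)
          \<and> (\<forall>k\<in>-H. \<forall>j<ncc k. - \<psi> k j \<xi> p < 0)
          \<and> (\<forall>m. xL $ m - \<xi> $ m < 0 \<and> \<xi> $ m - xU $ m < 0)" by blast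
  have SN: "S p \<noteq> {}" if pN: "p \<in> N" for p
  proof -
    obtain \<xi> where "(\<forall>k\<in>H. f \<xi> p $ k = 0)"
          "(\<forall>k\<in>-H. \<forall>j<ncv k. \<phi> k j \<xi> p < 0)"
          "(\<forall>k\<in>-H. \<forall>j<ncc k. - \<psi> k j \<xi> p < 0)"
          "(\<forall>m. xL $ m - \<xi> $ m < 0 \<and> \<xi> $ m - xU $ m < 0)" using sl pN by blast
    then have "\<xi> \<in> S p" unfolding S_def by (auto simp: less_imp_le)
    then show ?thesis by blast
  qed
  obtain e0 where e0: "e0 > 0" "ball phat e0 \<subseteq> N" using N open_contains_ball by blast
  define r where "r = e0 / 2"
  have r: "r > 0" "ball phat (2*r) \<subseteq> N" using e0 unfolding r_def by auto
  have NP: "N \<subseteq> P" using N QP by auto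
  have inB: "p \<in> P \<and> S p \<noteq> {}" if "p \<in> ball phat (2*r)" for p using that r NP SN by auto
  have xiB: "xi p \<in> S p \<and> (\<forall>\<xi>'\<in>S p. xi p $ i \<le> \<xi>' $ i) \<and> V p = xi p $ i
      \<and> xcv fcv fcc xL xU i p = ereal (xi p $ i)" if "p \<in> ball phat (2*r)" for p
    using xi inB that by blast
  have phatB: "phat \<in> ball phat (2*r)" using r by simp
  have phatP: "phat \<in> P" using N NP by auto
  have xh_S: "\<xi>hat \<in> S phat" using \<xi>hat_feas unfolding S_def by blast
  have xh_box: "\<xi>hat \<in> cbox xL xU" using S_box[OF xh_S] .
  have Vphat: "V phat = \<xi>hat $ i"
  proof -
    have a: "xi phat \<in> S phat" "V phat = xi phat $ i" "xi phat $ i \<le> \<xi>hat $ i"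
      using xiB[OF phatB] xh_S by auto
    have "\<xi>hat $ i \<le> xi phat $ i" using \<xi>hat_opt a(1) unfolding S_def by blast
    then show ?thesis using a by simp
  qed
  have Vconv: "convex_on (ball phat (2*r)) V"
  proof (rule convex_onI)
    show "convex (ball phat (2*r))" by simp
    fix t :: real and p q assume t: "0 < t" "t < 1" and p: "p \<in> ball phat (2*r)" and q: "q \<in> ball phat (2*r)"
    define pc where "pc = (1 - t) *\<^sub>R p + t *\<^sub>R q"
    define \<xi>c where "\<xi>c = (1 - t) *\<^sub>R xi p + t *\<^sub>R xi q"
    have t0: "0 \<le> t" "t \<le> 1" using t by auto
    have pc: "pc \<in> ball phat (2*r)" unfolding pc_def
      using convexD_alt[OF convex_ball p q t0] by simp
    have sp: "xi p \<in> S p" and sq: "xi q \<in> S q" using xiB p q by auto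
    have pP: "p \<in> P" "q \<in> P" using inB p q by auto
    have bp: "xi p \<in> cbox xL xU" "xi q \<in> cbox xL xU" using S_box sp sq by auto
    have mp: "(xi p, p) \<in> cbox xL xU \<times> P" "(xi q, q) \<in> cbox xL xU \<times> P" using bp pP by auto
    have "\<xi>c \<in> S pc"
    proof -
      have "f \<xi>c pc $ k = 0" if "k \<in> H" for k
      proof -
        have "f \<xi>c pc $ k = (1-t) * f (xi p) p $ k + t * f (xi q) q $ k"
          using h_affine that unfolding \<xi>c_def pc_def by (simp add: algebra_simps inner_add_right)
        then show ?thesis using sp sq that unfolding S_def by simp
      qed
      moreover have "\<phi> k j \<xi>c pc \<le> 0" if "k \<in> -H" "j < ncv k" for k j
      proof -
        have "(\<lambda>(z,q). \<phi> k j z q) ((1 - t) *\<^sub>R (xi p, p) + t *\<^sub>R (xi q, q))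
            \<le> (1-t) * (\<lambda>(z,q). \<phi> k j z q) (xi p, p) + t * (\<lambda>(z,q). \<phi> k j z q) (xi q, q)"
          using convex_onD[OF \<phi>_convex[rule_format, OF that] t0 mp] .
        then have "\<phi> k j \<xi>c pc \<le> (1-t) * \<phi> k j (xi p) p + t * \<phi> k j (xi q) q"
          unfolding \<xi>c_def pc_def by simp
        moreover have "\<phi> k j (xi p) p \<le> 0" "\<phi> k j (xi q) q \<le> 0" using sp sq that unfolding S_def by auto
        ultimately show ?thesis using comb_le[OF t0, of "\<phi> k j (xi p) p" 0 "\<phi> k j (xi q) q"] by linarith
      qed
      moreover have "- \<psi> k j \<xi>c pc \<le> 0" if "k \<in> -H" "j < ncc k" for k j
      proof -
        have "(\<lambda>(z,q). \<psi> k j z q) ((1 - t) *\<^sub>R (xi p, p) + t *\<^sub>R (xi q, q))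
            \<ge> (1-t) * (\<lambda>(z,q). \<psi> k j z q) (xi p, p) + t * (\<lambda>(z,q). \<psi> k j z q) (xi q, q)"
          using concave_onD[OF \<psi>_concave[rule_format, OF that] t0 mp] .
        then have "\<psi> k j \<xi>c pc \<ge> (1-t) * \<psi> k j (xi p) p + t * \<psi> k j (xi q) q"
          unfolding \<xi>c_def pc_def by simp
        moreover have "0 \<le> \<psi> k j (xi p) p" "0 \<le> \<psi> k j (xi q) q" using sp sq that unfolding S_def by auto
        ultimately show ?thesis using comb_ge[OF t0, of 0 "\<psi> k j (xi p) p" "\<psi> k j (xi q) q"] by linarith
      qed
      moreover have "xL $ m - \<xi>c $ m \<le> 0 \<and> \<xi>c $ m - xU $ m \<le> 0" for m
      proof -
        have "xL $ m \<le> xi p $ m" "xL $ m \<le> xi q $ m" "xi p $ m \<le> xU $ m" "xi q $ m \<le> xU $ m"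
          using bp unfolding mem_box_cart by auto
        moreover have "\<xi>c $ m = (1 - t) * xi p $ m + t * xi q $ m" unfolding \<xi>c_def by simp
        ultimately show ?thesis using comb_ge[OF t0, of "xL $ m" "xi p $ m" "xi q $ m"]
            comb_le[OF t0, of "xi p $ m" "xU $ m" "xi q $ m"] by linarith
      qed
      ultimately show ?thesis unfolding S_def by blast
    qed
    then have "V pc \<le> \<xi>c $ i" using xiB[OF pc] by auto
    also have "\<xi>c $ i = (1 - t) * V p + t * V q" unfolding \<xi>c_def using xiB p q by simp
    finally show "V ((1 - t) *\<^sub>R p + t *\<^sub>R q) \<le> (1 - t) * V p + t * V q" unfolding pc_def .
  qed
  define M where "M = \<bar>xL $ i\<bar> + \<bar>xU $ i\<bar>"
  have bd: "\<forall>p\<in>ball phat (2*r). \<bar>V p\<bar> \<le> M"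
  proof
    fix p assume p: "p \<in> ball phat (2*r)"
    then have "xi p \<in> cbox xL xU" "V p = xi p $ i" using xiB S_box by blast+
    then have "xL $ i \<le> V p" "V p \<le> xU $ i" unfolding mem_box_cart by auto
    then show "\<bar>V p\<bar> \<le> M" unfolding M_def by linarith
  qed
  define L where "L = 2 * M / r"
  have Lip: "\<forall>p\<in>ball phat r. \<forall>q\<in>ball phat r. \<bar>V p - V q\<bar> \<le> L * dist p q"
    using convex_lipschitz[OF Vconv r(1) bd] unfolding L_def .
  have part1: "\<exists>e>0. \<exists>L. \<forall>p\<in>ball phat e. \<forall>q\<in>ball phat e.
        \<bar>xcv fcv fcc xL xU i p\<bar> \<noteq> \<infinity> \<and>
        \<bar>real_of_ereal (xcv fcv fcc xL xU i p) - real_of_ereal (xcv fcv fcc xL xU i q)\<bar> \<le> L * dist p q"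
  proof -
    have "\<forall>p\<in>ball phat r. \<forall>q\<in>ball phat r. \<bar>xcv fcv fcc xL xU i p\<bar> \<noteq> \<infinity> \<and>
        \<bar>real_of_ereal (xcv fcv fcc xL xU i p) - real_of_ereal (xcv fcv fcc xL xU i q)\<bar> \<le> L * dist p q"
    proof (intro ballI conjI)
      fix p q assume p: "p \<in> ball phat r" and q: "q \<in> ball phat r"
      then have "p \<in> ball phat (2*r)" using r by auto
      then show "\<bar>xcv fcv fcc xL xU i p\<bar> \<noteq> \<infinity>" using xiB by simp
      show "\<bar>real_of_ereal (xcv fcv fcc xL xU i p) - real_of_ereal (xcv fcv fcc xL xU i q)\<bar> \<le> L * dist p q"
        using Lip p q unfolding V_def by blast
    qed
    then show ?thesis using r(1) by blast
  qed
  have evsmall: "eventually (\<lambda>t. 0 < t \<and> t * norm d < c) (at_right 0)" if c: "0 < c" for c and d :: "real^'p"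
  proof -
    have "eventually (\<lambda>t. - (c/2) + t * norm d \<le> 0) (at_right 0)"
      by (rule aff_ev) (use c in auto)
    moreover have "eventually (\<lambda>t::real. 0 < t) (at_right 0)" by (simp add: eventually_at_right_less)
    ultimately show ?thesis by eventually_elim (use c in auto)
  qed
  have part2: "(\<forall>d. \<exists>w.
        \<comment> \<open>w is feasible for the linearized problem\<close>
        (let lin = (\<lambda>w::real^'n.
             (\<forall>k\<in>-H. \<forall>j<ncv k. \<phi> k j \<xi>hat phat = 0 \<longrightarrow>
                 frechet_derivative (\<lambda>(z,q). \<phi> k j z q) (at (\<xi>hat, phat)) (w, d) \<le> 0)
           \<and> (\<forall>k\<in>-H. \<forall>j<ncc k. \<psi> k j \<xi>hat phat = 0 \<longrightarrow>
                 - frechet_derivative (\<lambda>(z,q). \<psi> k j z q) (at (\<xi>hat, phat)) (w, d) \<le> 0)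
           \<and> (\<forall>m. xL $ m - \<xi>hat $ m = 0 \<longrightarrow> - w $ m \<le> 0)
           \<and> (\<forall>m. \<xi>hat $ m - xU $ m = 0 \<longrightarrow> w $ m \<le> 0)
           \<and> (\<forall>k\<in>H. A k \<bullet> w = - (Bp k \<bullet> d)))
         in lin w \<and> (\<forall>w'. lin w' \<longrightarrow> w $ i \<le> w' $ i)
            \<and> has_dir_deriv (\<lambda>p. real_of_ereal (xcv fcv fcc xL xU i p)) phat d (w $ i)))"
  proof
    fix d :: "real^'p"
    define Dphi where "Dphi = (\<lambda>k j. frechet_derivative (\<lambda>(z,q). \<phi> k j z q) (at (\<xi>hat, phat)))"
    define Dpsi where "Dpsi = (\<lambda>k j. frechet_derivative (\<lambda>(z,q). \<psi> k j z q) (at (\<xi>hat, phat)))"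
    define lin where "lin = (\<lambda>w::real^'n.
             (\<forall>k\<in>-H. \<forall>j<ncv k. \<phi> k j \<xi>hat phat = 0 \<longrightarrow> Dphi k j (w, d) \<le> 0)
           \<and> (\<forall>k\<in>-H. \<forall>j<ncc k. \<psi> k j \<xi>hat phat = 0 \<longrightarrow> - Dpsi k j (w, d) \<le> 0)
           \<and> (\<forall>m. xL $ m - \<xi>hat $ m = 0 \<longrightarrow> - w $ m \<le> 0)
           \<and> (\<forall>m. \<xi>hat $ m - xU $ m = 0 \<longrightarrow> w $ m \<le> 0)
           \<and> (\<forall>k\<in>H. A k \<bullet> w = - (Bp k \<bullet> d)))"
    have phiD: "((\<lambda>(z,q). \<phi> k j z q) has_derivative Dphi k j) (at (\<xi>hat, phat))"
      if "k \<in> -H" "j < ncv k" for k j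
      unfolding Dphi_def using C1_deriv \<phi>_C1 that by blast
    have psiD: "((\<lambda>(z,q). \<psi> k j z q) has_derivative Dpsi k j) (at (\<xi>hat, phat))"
      if "k \<in> -H" "j < ncc k" for k j
      unfolding Dpsi_def using C1_deriv \<psi>_C1 that by blast
    have npsiD: "((\<lambda>x. - (\<lambda>(z,q). \<psi> k j z q) x) has_derivative (\<lambda>v. - Dpsi k j v)) (at (\<xi>hat, phat))"
      if "k \<in> -H" "j < ncc k" for k j
      using has_derivative_minus[OF psiD[OF that]] .
    have linphi: "linear (Dphi k j)" if "k \<in> -H" "j < ncv k" for k j
      using has_derivative_linear[OF phiD[OF that]] .
    have linpsi: "linear (Dpsi k j)" if "k \<in> -H" "j < ncc k" for k j
      using has_derivative_linear[OF psiD[OF that]] .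
    have npsiC: "convex_on (cbox xL xU \<times> P) (\<lambda>x. - (\<lambda>(z,q). \<psi> k j z q) x)"
      if "k \<in> -H" "j < ncc k" for k j
      using \<psi>_concave that unfolding concave_on_def by blast
    have xhP: "(\<xi>hat, phat) \<in> cbox xL xU \<times> P" using xh_box phatP by simp
    have stepA: "lin ((1/t) *\<^sub>R (xi (phat + t *\<^sub>R d) - \<xi>hat)) \<and>
        ((1/t) *\<^sub>R (xi (phat + t *\<^sub>R d) - \<xi>hat)) $ i = (V (phat + t *\<^sub>R d) - V phat) / t"
      if t: "0 < t" "t * norm d < 2*r" for t
    proof -
      define pt where "pt = phat + t *\<^sub>R d"
      define w where "w = (1/t) *\<^sub>R (xi pt - \<xi>hat)"
      have ptB: "pt \<in> ball phat (2*r)" unfolding pt_def using t by (simp add: dist_norm)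
      have spt: "xi pt \<in> S pt" "V pt = xi pt $ i" using xiB[OF ptB] by auto
      have ptP: "pt \<in> P" using inB ptB by auto
      have mpt: "(xi pt, pt) \<in> cbox xL xU \<times> P" using S_box spt ptP by auto
      have tw: "t *\<^sub>R w = xi pt - \<xi>hat" unfolding w_def using t by simp
      have Delta: "(xi pt, pt) - (\<xi>hat, phat) = t *\<^sub>R (w, d)" using tw unfolding pt_def by simp
      have "lin w" unfolding lin_def
      proof (intro conjI ballI allI impI)
        fix k j assume k: "k \<in> -H" and j: "j < ncv k" and act: "\<phi> k j \<xi>hat phat = 0"
        have "(\<lambda>(z,q). \<phi> k j z q) (\<xi>hat,phat) + Dphi k j ((xi pt, pt) - (\<xi>hat, phat))
            \<le> (\<lambda>(z,q). \<phi> k j z q) (xi pt, pt)"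
          using grad_ineq[OF \<phi>_convex[rule_format, OF k j] phiD[OF k j] xhP mpt] .
        moreover have "\<phi> k j (xi pt) pt \<le> 0" using spt k j unfolding S_def by auto
        moreover have "Dphi k j ((xi pt, pt) - (\<xi>hat, phat)) = t * Dphi k j (w,d)"
          unfolding Delta using linear_cmul[OF linphi[OF k j], of t "(w,d)"] by (simp only: real_scaleR_def)
        ultimately have "t * Dphi k j (w,d) \<le> 0" using act by simp
        then show "Dphi k j (w,d) \<le> 0" using t by (simp add: mult_le_0_iff)
      next
        fix k j assume k: "k \<in> -H" and j: "j < ncc k" and act: "\<psi> k j \<xi>hat phat = 0"
        have "- (\<lambda>(z,q). \<psi> k j z q) (\<xi>hat,phat) + - Dpsi k j ((xi pt, pt) - (\<xi>hat, phat))
            \<le> - (\<lambda>(z,q). \<psi> k j z q) (xi pt, pt)"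
          using grad_ineq[OF npsiC[OF k j] npsiD[OF k j] xhP mpt] .
        moreover have "- \<psi> k j (xi pt) pt \<le> 0" using spt k j unfolding S_def by auto
        moreover have "Dpsi k j ((xi pt, pt) - (\<xi>hat, phat)) = t * Dpsi k j (w,d)"
          unfolding Delta using linear_cmul[OF linpsi[OF k j], of t "(w,d)"] by (simp only: real_scaleR_def)
        ultimately have "t * (- Dpsi k j (w,d)) \<le> 0" using act by simp
        then show "- Dpsi k j (w,d) \<le> 0" using t by (simp add: zero_le_mult_iff)
      next
        fix m assume act: "xL $ m - \<xi>hat $ m = 0"
        have "xL $ m \<le> xi pt $ m" using S_box[OF spt(1)] unfolding mem_box_cart by auto
        then have "0 \<le> xi pt $ m - \<xi>hat $ m" using act by simp
        moreover have "w $ m = (1/t) * (xi pt $ m - \<xi>hat $ m)" unfolding w_def by simp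
        ultimately show "- w $ m \<le> 0" using t by simp
      next
        fix m assume act: "\<xi>hat $ m - xU $ m = 0"
        have "xi pt $ m \<le> xU $ m" using S_box[OF spt(1)] unfolding mem_box_cart by auto
        then have "xi pt $ m - \<xi>hat $ m \<le> 0" using act by simp
        moreover have "w $ m = (1/t) * (xi pt $ m - \<xi>hat $ m)" unfolding w_def by simp
        ultimately show "w $ m \<le> 0" using t by (simp add: divide_nonpos_pos)
      next
        fix k assume k: "k \<in> H"
        have "f (xi pt) pt $ k = 0" "f \<xi>hat phat $ k = 0" using spt(1) xh_S k unfolding S_def by auto
        then have e1: "C k + A k \<bullet> xi pt + Bp k \<bullet> pt = 0" "C k + A k \<bullet> \<xi>hat + Bp k \<bullet> phat = 0"
          using h_affine k by auto
        have "A k \<bullet> (t *\<^sub>R w) = - (Bp k \<bullet> (t *\<^sub>R d))"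
          unfolding tw using e1 unfolding pt_def by (simp add: inner_diff_right inner_add_right)
        then have "t * (A k \<bullet> w) = t * (- (Bp k \<bullet> d))" by simp
        then show "A k \<bullet> w = - (Bp k \<bullet> d)" using t mult_left_cancel[of t] by (metis less_irrefl)
      qed
      moreover have "w $ i = (V pt - V phat) / t" using spt Vphat unfolding w_def by simp
      ultimately show ?thesis unfolding w_def pt_def by simp
    qed
    obtain \<xi>0 where \<xi>0: "\<xi>0 \<in> cbox xL xU" "\<forall>k\<in>H. f \<xi>0 phat $ k = 0"
          "\<forall>k\<in>-H. \<forall>j<ncv k. \<phi> k j \<xi>0 phat < 0"
          "\<forall>k\<in>-H. \<forall>j<ncc k. - \<psi> k j \<xi>0 phat < 0"
          "\<forall>m. xL $ m - \<xi>0 $ m < 0 \<and> \<xi>0 $ m - xU $ m < 0" using sl N(2) by blast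
    have x0P: "(\<xi>0, phat) \<in> cbox xL xU \<times> P" using \<xi>0(1) phatP by simp
    have stepB: "eventually (\<lambda>t. (V (phat + t *\<^sub>R d) - V phat) / t \<le> w $ i + \<epsilon>) (at_right 0)"
      if lw: "lin w" and \<epsilon>: "\<epsilon> > 0" for w \<epsilon>
    proof -
      define \<delta> where "\<delta> = \<epsilon> / (1 + \<bar>\<xi>0 $ i - \<xi>hat $ i\<bar>)"
      have pos: "0 < 1 + \<bar>\<xi>0 $ i - \<xi>hat $ i\<bar>" using abs_ge_zero[of "\<xi>0 $ i - \<xi>hat $ i"] by linarith
      have \<delta>0: "\<delta> > 0" unfolding \<delta>_def using \<epsilon> pos by simp
      have \<delta>1: "\<delta> * (1 + \<bar>\<xi>0 $ i - \<xi>hat $ i\<bar>) = \<epsilon>" unfolding \<delta>_def using pos by simp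
      have \<delta>\<epsilon>: "\<delta> * (\<xi>0 $ i - \<xi>hat $ i) \<le> \<epsilon>"
      proof -
        have "\<delta> * (\<xi>0 $ i - \<xi>hat $ i) \<le> \<delta> * (1 + \<bar>\<xi>0 $ i - \<xi>hat $ i\<bar>)"
          using \<delta>0 by (intro mult_left_mono) auto
        then show ?thesis using \<delta>1 by simp
      qed
      define we where "we = w + \<delta> *\<^sub>R (\<xi>0 - \<xi>hat)"
      have wev: "(we, d) = (w, d) + \<delta> *\<^sub>R (\<xi>0 - \<xi>hat, 0)" unfolding we_def by simp
      have evphi: "eventually (\<lambda>t. \<forall>k. k \<in> -H \<longrightarrow> (\<forall>j\<in>{..<ncv k}.
          \<phi> k j (\<xi>hat + t *\<^sub>R we) (phat + t *\<^sub>R d) \<le> 0)) (at_right 0)"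
      proof (rule eventually_all_finite)
        fix k
        show "eventually (\<lambda>t. k \<in> -H \<longrightarrow> (\<forall>j\<in>{..<ncv k}.
          \<phi> k j (\<xi>hat + t *\<^sub>R we) (phat + t *\<^sub>R d) \<le> 0)) (at_right 0)"
        proof (cases "k \<in> -H")
          case False then show ?thesis by simp
        next
          case k: True
          have "eventually (\<lambda>t. \<forall>j\<in>{..<ncv k}. \<phi> k j (\<xi>hat + t *\<^sub>R we) (phat + t *\<^sub>R d) \<le> 0) (at_right 0)"
          proof (rule eventually_ball_finite[OF finite_lessThan], rule ballI)
            fix j assume "j \<in> {..<ncv k}" then have j: "j < ncv k" by simp
            have fe: "(\<lambda>(z,q). \<phi> k j z q) (\<xi>hat, phat) \<le> 0" using xh_S k j unfolding S_def by auto
            have neg: "Dphi k j (we, d) < 0" if act: "(\<lambda>(z,q). \<phi> k j z q) (\<xi>hat, phat) = 0"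
            proof -
              have a1: "Dphi k j (w, d) \<le> 0" using lw act k j unfolding lin_def by auto
              have "(\<lambda>(z,q). \<phi> k j z q) (\<xi>hat,phat) + Dphi k j ((\<xi>0, phat) - (\<xi>hat, phat))
                  \<le> (\<lambda>(z,q). \<phi> k j z q) (\<xi>0, phat)"
                using grad_ineq[OF \<phi>_convex[rule_format, OF k j] phiD[OF k j] xhP x0P] .
              moreover have "\<phi> k j \<xi>0 phat < 0" using \<xi>0(3) k j by auto
              ultimately have a2: "Dphi k j (\<xi>0 - \<xi>hat, 0) < 0" using act by simp
              have "Dphi k j (we, d) = Dphi k j (w,d) + \<delta> * Dphi k j (\<xi>0 - \<xi>hat, 0)"
                unfolding wev using linear_add[OF linphi[OF k j]] linear_cmul[OF linphi[OF k j], of \<delta> "(\<xi>0 - \<xi>hat, 0)"]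
                by (simp only: real_scaleR_def)
              moreover have "\<delta> * Dphi k j (\<xi>0 - \<xi>hat, 0) < 0" using \<delta>0 a2 by (simp add: mult_pos_neg)
              ultimately show ?thesis using a1 by linarith
            qed
            have "eventually (\<lambda>t. (\<lambda>(z,q). \<phi> k j z q) ((\<xi>hat, phat) + t *\<^sub>R (we, d)) \<le> 0) (at_right 0)"
              by (rule ev_le[OF phiD[OF k j]]) (use fe neg in auto)
            then show "eventually (\<lambda>t. \<phi> k j (\<xi>hat + t *\<^sub>R we) (phat + t *\<^sub>R d) \<le> 0) (at_right 0)"
              by simp
          qed
          then show ?thesis by simp
        qed
      qed
      have evpsi: "eventually (\<lambda>t. \<forall>k. k \<in> -H \<longrightarrow> (\<forall>j\<in>{..<ncc k}.
          - \<psi> k j (\<xi>hat + t *\<^sub>R we) (phat + t *\<^sub>R d) \<le> 0)) (at_right 0)"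
      proof (rule eventually_all_finite)
        fix k
        show "eventually (\<lambda>t. k \<in> -H \<longrightarrow> (\<forall>j\<in>{..<ncc k}.
          - \<psi> k j (\<xi>hat + t *\<^sub>R we) (phat + t *\<^sub>R d) \<le> 0)) (at_right 0)"
        proof (cases "k \<in> -H")
          case False then show ?thesis by simp
        next
          case k: True
          have "eventually (\<lambda>t. \<forall>j\<in>{..<ncc k}. - \<psi> k j (\<xi>hat + t *\<^sub>R we) (phat + t *\<^sub>R d) \<le> 0) (at_right 0)"
          proof (rule eventually_ball_finite[OF finite_lessThan], rule ballI)
            fix j assume "j \<in> {..<ncc k}" then have j: "j < ncc k" by simp
            have fe: "- (\<lambda>(z,q). \<psi> k j z q) (\<xi>hat, phat) \<le> 0" using xh_S k j unfolding S_def by auto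
            have neg: "- Dpsi k j (we, d) < 0" if act: "- (\<lambda>(z,q). \<psi> k j z q) (\<xi>hat, phat) = 0"
            proof -
              have a1: "- Dpsi k j (w, d) \<le> 0" using lw act k j unfolding lin_def by auto
              have "- (\<lambda>(z,q). \<psi> k j z q) (\<xi>hat,phat) + - Dpsi k j ((\<xi>0, phat) - (\<xi>hat, phat))
                  \<le> - (\<lambda>(z,q). \<psi> k j z q) (\<xi>0, phat)"
                using grad_ineq[OF npsiC[OF k j] npsiD[OF k j] xhP x0P] .
              moreover have "- \<psi> k j \<xi>0 phat < 0" using \<xi>0(4) k j by auto
              ultimately have a2: "- Dpsi k j (\<xi>0 - \<xi>hat, 0) < 0" using act by simp
              have "Dpsi k j (we, d) = Dpsi k j (w,d) + \<delta> * Dpsi k j (\<xi>0 - \<xi>hat, 0)"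
                unfolding wev using linear_add[OF linpsi[OF k j]] linear_cmul[OF linpsi[OF k j], of \<delta> "(\<xi>0 - \<xi>hat, 0)"]
                by (simp only: real_scaleR_def)
              moreover have "\<delta> * Dpsi k j (\<xi>0 - \<xi>hat, 0) > 0" using \<delta>0 a2 by simp
              ultimately show ?thesis using a1 by linarith
            qed
            have "eventually (\<lambda>t. - (\<lambda>(z,q). \<psi> k j z q) ((\<xi>hat, phat) + t *\<^sub>R (we, d)) \<le> 0) (at_right 0)"
              by (rule ev_le[OF npsiD[OF k j]]) (use fe neg in auto)
            then show "eventually (\<lambda>t. - \<psi> k j (\<xi>hat + t *\<^sub>R we) (phat + t *\<^sub>R d) \<le> 0) (at_right 0)"
              by simp
          qed
          then show ?thesis by simp
        qed
      qed
      have evbox: "eventually (\<lambda>t. \<forall>m. xL $ m - (\<xi>hat + t *\<^sub>R we) $ m \<le> 0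
          \<and> (\<xi>hat + t *\<^sub>R we) $ m - xU $ m \<le> 0) (at_right 0)"
      proof (rule eventually_all_finite)
        fix m
        have lo: "xL $ m \<le> \<xi>hat $ m" "\<xi>hat $ m \<le> xU $ m" using xh_box unfolding mem_box_cart by auto
        have s0: "xL $ m < \<xi>0 $ m" "\<xi>0 $ m < xU $ m" using \<xi>0(5)[rule_format, of m] by auto
        have wem: "we $ m = w $ m + \<delta> * (\<xi>0 $ m - \<xi>hat $ m)" unfolding we_def by simp
        have "eventually (\<lambda>t. (xL $ m - \<xi>hat $ m) + t * (- we $ m) \<le> 0) (at_right 0)"
        proof (rule aff_ev)
          show "xL $ m - \<xi>hat $ m \<le> 0" using lo by simp
          assume act: "xL $ m - \<xi>hat $ m = 0"
          then have "- w $ m \<le> 0" using lw unfolding lin_def by blast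
          moreover have "0 < \<delta> * (\<xi>0 $ m - \<xi>hat $ m)" using act s0 \<delta>0 by simp
          ultimately show "- we $ m \<le> 0" using wem by linarith
        qed
        moreover have "eventually (\<lambda>t. (\<xi>hat $ m - xU $ m) + t * (we $ m) \<le> 0) (at_right 0)"
        proof (rule aff_ev)
          show "\<xi>hat $ m - xU $ m \<le> 0" using lo by simp
          assume act: "\<xi>hat $ m - xU $ m = 0"
          then have "w $ m \<le> 0" using lw unfolding lin_def by blast
          moreover have "\<delta> * (\<xi>0 $ m - \<xi>hat $ m) < 0" using act s0 \<delta>0 by (simp add: mult_pos_neg)
          ultimately show "we $ m \<le> 0" using wem by linarith
        qed
        ultimately show "eventually (\<lambda>t. xL $ m - (\<xi>hat + t *\<^sub>R we) $ m \<le> 0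
          \<and> (\<xi>hat + t *\<^sub>R we) $ m - xU $ m \<le> 0) (at_right 0)"
          by eventually_elim (simp add: algebra_simps)
      qed
      have Heq: "f (\<xi>hat + t *\<^sub>R we) (phat + t *\<^sub>R d) $ k = 0" if k: "k \<in> H" for k t
      proof -
        have e1: "C k + A k \<bullet> \<xi>hat + Bp k \<bullet> phat = 0" using \<xi>hat_feas h_affine k by auto
        have e2: "C k + A k \<bullet> \<xi>0 + Bp k \<bullet> phat = 0" using \<xi>0(2) h_affine k by auto
        have e3: "A k \<bullet> w = - (Bp k \<bullet> d)" using lw k unfolding lin_def by blast
        have e4: "A k \<bullet> \<xi>0 = A k \<bullet> \<xi>hat" using e1 e2 by linarith
        have "A k \<bullet> we = A k \<bullet> w" unfolding we_def by (simp add: inner_add_right inner_diff_right e4)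
        then have "f (\<xi>hat + t *\<^sub>R we) (phat + t *\<^sub>R d) $ k
            = (C k + A k \<bullet> \<xi>hat + Bp k \<bullet> phat) + t * (A k \<bullet> w + Bp k \<bullet> d)"
          using h_affine k by (simp add: inner_add_right algebra_simps)
        then show ?thesis using e1 e3 by simp
      qed
      have evsm: "eventually (\<lambda>t. 0 < t \<and> t * norm d < 2*r) (at_right 0)"
        using evsmall r(1) by simp
      show ?thesis using evphi evpsi evbox evsm
      proof eventually_elim
        case (elim t)
        define pt where "pt = phat + t *\<^sub>R d"
        have t0: "0 < t" using elim by simp
        have ptB: "pt \<in> ball phat (2*r)" unfolding pt_def using elim by (simp add: dist_norm)
        have "\<xi>hat + t *\<^sub>R we \<in> S pt"
          unfolding S_def pt_def using elim Heq by auto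
        then have "V pt \<le> (\<xi>hat + t *\<^sub>R we) $ i" using xiB[OF ptB] by auto
        then have "V pt - V phat \<le> t * we $ i" using Vphat by simp
        then have "(V pt - V phat) / t \<le> we $ i" using t0 by (simp add: divide_le_eq mult.commute)
        also have "we $ i = w $ i + \<delta> * (\<xi>0 $ i - \<xi>hat $ i)" unfolding we_def by simp
        finally show ?case unfolding pt_def using \<delta>\<epsilon> by linarith
      qed
    qed
    have Lbd: "- (L * norm d) - 1 \<le> w $ i" if lw: "lin w" for w
    proof -
      have e1: "eventually (\<lambda>t. (V (phat + t *\<^sub>R d) - V phat) / t \<le> w $ i + 1) (at_right 0)"
        using stepB[OF lw, of 1] by simp
      have e2: "eventually (\<lambda>t. 0 < t \<and> t * norm d < r) (at_right 0)" using evsmall r(1) by simp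
      have "eventually (\<lambda>t. - (L * norm d) \<le> (V (phat + t *\<^sub>R d) - V phat) / t) (at_right 0)"
        using e2
      proof eventually_elim
        case (elim t)
        then have t0: "0 < t" by simp
        have pB: "phat + t *\<^sub>R d \<in> ball phat r" using elim by (simp add: dist_norm)
        have "\<bar>V (phat + t *\<^sub>R d) - V phat\<bar> \<le> L * dist (phat + t *\<^sub>R d) phat"
          using Lip pB r(1) by simp
        also have "dist (phat + t *\<^sub>R d) phat = t * norm d" using t0 by (simp add: dist_norm)
        finally have "- (L * (t * norm d)) \<le> V (phat + t *\<^sub>R d) - V phat" by linarith
        then have "t * (- (L * norm d)) \<le> V (phat + t *\<^sub>R d) - V phat" by (simp add: algebra_simps)
        then show ?case using t0 by (simp add: le_divide_eq mult.commute)
      qed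
      with e1 have "eventually (\<lambda>t. (V (phat + t *\<^sub>R d) - V phat) / t \<le> w $ i + 1 \<and>
          - (L * norm d) \<le> (V (phat + t *\<^sub>R d) - V phat) / t) (at_right 0)"
        by (rule eventually_conj)
      then obtain t where "(V (phat + t *\<^sub>R d) - V phat) / t \<le> w $ i + 1"
          "- (L * norm d) \<le> (V (phat + t *\<^sub>R d) - V phat) / t"
        using eventually_happens'[of "at_right (0::real)"] by auto
      then show ?thesis by linarith
    qed
    define K1 where "K1 = (\<lambda>(k,j). (\<lambda>w. Dphi k j (w, d))) ` {(k,j). k \<in> -H \<and> j < ncv k \<and> \<phi> k j \<xi>hat phat = 0}"
    define K2 where "K2 = (\<lambda>(k,j). (\<lambda>w. - Dpsi k j (w, d))) ` {(k,j). k \<in> -H \<and> j < ncc k \<and> \<psi> k j \<xi>hat phat = 0}"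
    define K3 where "K3 = (\<lambda>m. (\<lambda>w::real^'n. - w $ m)) ` {m. xL $ m - \<xi>hat $ m = 0}"
    define K4 where "K4 = (\<lambda>m. (\<lambda>w::real^'n. w $ m)) ` {m. \<xi>hat $ m - xU $ m = 0}"
    define J where "J = (\<lambda>k. (\<lambda>w. A k \<bullet> w + Bp k \<bullet> d)) ` H"
    define K where "K = K1 \<union> K2 \<union> K3 \<union> K4"
    have linK: "lin w \<longleftrightarrow> (\<forall>h\<in>K. h w \<le> 0) \<and> (\<forall>h\<in>J. h w = 0)" for w
    proof -
      have f5: "(\<forall>h\<in>J. h w = 0) \<longleftrightarrow> (\<forall>k\<in>H. A k \<bullet> w = - (Bp k \<bullet> d))"
        unfolding J_def by (auto simp: add_eq_0_iff)
      have f1: "(\<forall>h\<in>K1. h w \<le> 0) \<longleftrightarrow> (\<forall>k\<in>-H. \<forall>j<ncv k. \<phi> k j \<xi>hat phat = 0 \<longrightarrow> Dphi k j (w, d) \<le> 0)"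
        unfolding K1_def by auto
      have f2: "(\<forall>h\<in>K2. h w \<le> 0) \<longleftrightarrow> (\<forall>k\<in>-H. \<forall>j<ncc k. \<psi> k j \<xi>hat phat = 0 \<longrightarrow> - Dpsi k j (w, d) \<le> 0)"
        unfolding K2_def by auto
      have f3: "(\<forall>h\<in>K3. h w \<le> 0) \<longleftrightarrow> (\<forall>m. xL $ m - \<xi>hat $ m = 0 \<longrightarrow> - w $ m \<le> 0)"
        unfolding K3_def by auto
      have f4: "(\<forall>h\<in>K4. h w \<le> 0) \<longleftrightarrow> (\<forall>m. \<xi>hat $ m - xU $ m = 0 \<longrightarrow> w $ m \<le> 0)"
        unfolding K4_def by auto
      show ?thesis by (simp only: lin_def K_def ball_Un f1 f2 f3 f4 f5 conj_assoc)
    qed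
    have finK: "finite K"
    proof -
      have "finite {(k,j). k \<in> -H \<and> j < ncv k \<and> \<phi> k j \<xi>hat phat = 0}"
        by (rule finite_subset[of _ "SIGMA k:UNIV. {..<ncv k}"]) auto
      moreover have "finite {(k,j). k \<in> -H \<and> j < ncc k \<and> \<psi> k j \<xi>hat phat = 0}"
        by (rule finite_subset[of _ "SIGMA k:UNIV. {..<ncc k}"]) auto
      ultimately show ?thesis unfolding K_def K1_def K2_def K3_def K4_def by simp
    qed
    have affK: "\<forall>h\<in>K. aff h"
      unfolding K_def K1_def K2_def K3_def K4_def
      using aff_lin_pair[OF linphi] aff_neg[OF aff_lin_pair[OF linpsi]] aff_neg[OF aff_nth] aff_nth
      by auto
    have affJ: "\<forall>h\<in>J. aff h" unfolding J_def using aff_inner by auto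
    obtain t0 where t0: "0 < t0 \<and> t0 * norm d < 2*r"
      using eventually_happens'[OF _ evsmall[OF mult_pos_pos[OF _ r(1)], of 2 d]] by auto
    obtain w1 where w1: "lin w1" using stepA t0 by blast
    have ex1: "\<exists>w. (\<forall>h\<in>K. h w \<le> 0) \<and> (\<forall>h\<in>J. h w = 0)"
      using w1 linK[of w1] by blast
    have bd1: "\<forall>w. (\<forall>h\<in>K. h w \<le> 0) \<and> (\<forall>h\<in>J. h w = 0) \<longrightarrow> - (L * norm d) - 1 \<le> w $ i"
    proof (intro allI impI)
      fix w assume "(\<forall>h\<in>K. h w \<le> 0) \<and> (\<forall>h\<in>J. h w = 0)"
      then have "lin w" using linK[of w] by blast
      then show "- (L * norm d) - 1 \<le> w $ i" by (rule Lbd)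
    qed
    obtain ws where ws1: "(\<forall>h\<in>K. h ws \<le> 0) \<and> (\<forall>h\<in>J. h ws = 0)"
      and ws2: "\<forall>w'. (\<forall>h\<in>K. h w' \<le> 0) \<and> (\<forall>h\<in>J. h w' = 0) \<longrightarrow> ws $ i \<le> w' $ i"
      using lp_attain[OF finK affK affJ aff_nth ex1 bd1] by blast
    have ws: "lin ws" "\<forall>w'. lin w' \<longrightarrow> ws $ i \<le> w' $ i"
    proof -
      show "lin ws" using ws1 linK[of ws] by blast
      show "\<forall>w'. lin w' \<longrightarrow> ws $ i \<le> w' $ i"
      proof (intro allI impI)
        fix w' assume "lin w'"
        then have "(\<forall>h\<in>K. h w' \<le> 0) \<and> (\<forall>h\<in>J. h w' = 0)" using linK[of w'] by blast
        then show "ws $ i \<le> w' $ i" using ws2 by blast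
      qed
    qed
    have dd: "has_dir_deriv V phat d (ws $ i)"
      unfolding has_dir_deriv_def
    proof (rule order_tendstoI)
      fix a assume a: "a < ws $ i"
      show "eventually (\<lambda>t. a < (V (phat + t *\<^sub>R d) - V phat) / t) (at_right 0)"
        using evsmall[OF mult_pos_pos[OF _ r(1)], of 2 d]
      proof (rule eventually_mono)
        fix t assume t: "0 < t \<and> t * norm d < 2 * r"
        then have "ws $ i \<le> (V (phat + t *\<^sub>R d) - V phat) / t" using stepA[of t] ws(2) by auto
        then show "a < (V (phat + t *\<^sub>R d) - V phat) / t" using a by linarith
      qed simp
    next
      fix a assume a: "ws $ i < a"
      have "eventually (\<lambda>t. (V (phat + t *\<^sub>R d) - V phat) / t \<le> ws $ i + (a - ws $ i) / 2) (at_right 0)"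
        using stepB[OF ws(1)] a by simp
      then show "eventually (\<lambda>t. (V (phat + t *\<^sub>R d) - V phat) / t < a) (at_right 0)"
      proof (rule eventually_mono)
        fix t assume h: "(V (phat + t *\<^sub>R d) - V phat) / t \<le> ws $ i + (a - ws $ i) / 2"
        have "ws $ i + (a - ws $ i) / 2 < a" using a by (simp add: field_simps)
        then show "(V (phat + t *\<^sub>R d) - V phat) / t < a" using h by (rule le_less_trans[rotated])
      qed
    qed
    have "\<exists>w. lin w \<and> (\<forall>w'. lin w' \<longrightarrow> w $ i \<le> w' $ i) \<and> has_dir_deriv V phat d (w $ i)"
      using ws dd by blast
    then show "\<exists>w.
        \<comment> \<open>w is feasible for the linearized problem\<close>
        (let lin = (\<lambda>w::real^'n.
             (\<forall>k\<in>-H. \<forall>j<ncv k. \<phi> k j \<xi>hat phat = 0 \<longrightarrow>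
                 frechet_derivative (\<lambda>(z,q). \<phi> k j z q) (at (\<xi>hat, phat)) (w, d) \<le> 0)
           \<and> (\<forall>k\<in>-H. \<forall>j<ncc k. \<psi> k j \<xi>hat phat = 0 \<longrightarrow>
                 - frechet_derivative (\<lambda>(z,q). \<psi> k j z q) (at (\<xi>hat, phat)) (w, d) \<le> 0)
           \<and> (\<forall>m. xL $ m - \<xi>hat $ m = 0 \<longrightarrow> - w $ m \<le> 0)
           \<and> (\<forall>m. \<xi>hat $ m - xU $ m = 0 \<longrightarrow> w $ m \<le> 0)
           \<and> (\<forall>k\<in>H. A k \<bullet> w = - (Bp k \<bullet> d)))
         in lin w \<and> (\<forall>w'. lin w' \<longrightarrow> w $ i \<le> w' $ i)
            \<and> has_dir_deriv (\<lambda>p. real_of_ereal (xcv fcv fcc xL xU i p)) phat d (w $ i))"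
      unfolding Let_def lin_def Dphi_def Dpsi_def V_def by blast


  qed
  show ?thesis using part1 part2 by blast
qed

end
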